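(* In the setting described in the context, let $(x^k)_{k\in\mathbb N}$ be the sequence generated by Method 2. Then $(x^k)$ is bounded; moreover, with $\bar x:=P_{\operatorname{zer}(A+B)}(x^0)$ and $\rho:=\operatorname{dist}(x^0,\operatorname{zer}(A+B))$, $$(x^k)_{k\in\mathbb N}\subset\mathbb B\Big[\tfrac12(x^0+\bar x);\tfrac12\rho\Big],$$ where $\mathbb B[x;\gamma]:=\{y\in\mathcal H:\|y-x\|\le\gamma\}$.
   Context: Let $\mathcal H$ be a real Hilbert space with inner product $\langle\cdot,\cdot\rangle$ and norm $\|\cdot\|$. Let $A_1:\mathcal H\to\mathcal H$ be $\beta$-cocoercive for some $\beta>0$ (i.e. $\langle A_1x-A_1y,x-y\rangle\ge\beta\|A_1x-A_1y\|^2$ for all $x,y$), let $A_2:\mathcal H\to\mathcal H$ be maximally monotone and uniformly continuous, let $B:\mathcal H\rightrightarrows\mathcal H$ be maximally monotone, and set $A:=A_1+A_2$. Assume $\operatorname{zer}(A+B):=\{x:0\in Ax+Bx\}\neq\emptyset$. $J_{\alpha B}:=(I+\alpha B)^{-1}$ for $\alpha>0$, and $P_C$ denotes the orthogonal projection onto a nonempty closed convex set $C$. Fix $\theta,\delta\in(0,1)$, $\bar\delta>0$ with $1-\delta-\bar\delta>0$, and $\alpha_{-1}>0$ with $\alpha_{-1}\le4\beta\bar\delta$. Conceptual Algorithm: pick $x^0\in\mathcal H$. Given $x^k$ and $\alpha_{k-1}$, for $j\in\mathbb N$ let $\bar x^k_j:=J_{\alpha_{k-1}\theta^jB}(x^k-\alpha_{k-1}\theta^jAx^k)$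 and let $j(k)$ be the smallest $j\in\mathbb N$ with $\alpha_{k-1}\theta^j\langle A_2x^k-A_2\bar x^k_j,x^k-\bar x^k_j\rangle\le\delta\|x^k-\bar x^k_j\|^2$. Set $\alpha_k:=\alpha_{k-1}\theta^{j(k)}$, $\bar x^k:=J_{\alpha_kB}(x^k-\alpha_kAx^k)$, $r_k:=\frac{\bar\delta}{\alpha_k}\|x^k-\bar x^k\|^2$, $T_k:=\{x\in\mathcal H:\langle \frac{x^k-\bar x^k}{\alpha_k}-(A_2x^k-A_2\bar x^k),x-\bar x^k\rangle\le r_k\}$ and $\Gamma_k:=\{x\in\mathcal H:\langle x^0-x^k,x-x^k\rangle\le0\}$. Method 2 sets $x^{k+1}:=P_{T_k\cap\Gamma_k}(x^0)$ and stops if $x^{k+1}=x^k$. *)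

theory Defs
  imports "HOL-Analysis.Analysis"
begin

definition cocoercive :: "real \<Rightarrow> ('a::real_inner \<Rightarrow> 'a) \<Rightarrow> bool" where
  "cocoercive \<beta> T \<longleftrightarrow> (\<forall>x y. inner (T x - T y) (x - y) \<ge> \<beta> * (norm (T x - T y))\<^sup>2)"

definition monotone_op :: "('a::real_inner \<Rightarrow> 'a set) \<Rightarrow> bool" where
  "monotone_op B \<longleftrightarrow> (\<forall>x y u v. u \<in> B x \<longrightarrow> v \<in> B y \<longrightarrow> inner (u - v) (x - y) \<ge> 0)"

definition maximal_monotone :: "('a::real_inner \<Rightarrow> 'a set) \<Rightarrow> bool" where
  "maximal_monotone B \<longleftrightarrow> monotone_op B \<and>
     (\<forall>x u. (\<forall>y v. v \<in> B y \<longrightarrow> inner (u - v) (x - y) \<ge> 0) \<longrightarrow> u \<in> B x)"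

text \<open>Resolvent J_{\<alpha>B} = (I + \<alpha>B)^{-1}: the unique x with z \<in> x + \<alpha> B x.\<close>
definition resolvent :: "real \<Rightarrow> ('a::real_inner \<Rightarrow> 'a set) \<Rightarrow> 'a \<Rightarrow> 'a" where
  "resolvent \<alpha> B z = (THE x. \<exists>u \<in> B x. z = x + \<alpha> *\<^sub>R u)"

definition zer_sum :: "('a::real_vector \<Rightarrow> 'a) \<Rightarrow> ('a \<Rightarrow> 'a set) \<Rightarrow> 'a set" where
  "zer_sum A B = {x. \<exists>u \<in> B x. A x + u = 0}"

definition proj :: "'a::real_inner set \<Rightarrow> 'a \<Rightarrow> 'a" where
  "proj C x = (SOME y. y \<in> C \<and> (\<forall>z \<in> C. dist x y \<le> dist x z))"

text \<open>Trial point \<bar>x^k_j for step size a (= \<alpha>_{k-1} \<theta>^j) at the point x.\<close>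
definition trial_pt :: "('a::real_inner \<Rightarrow> 'a) \<Rightarrow> ('a \<Rightarrow> 'a) \<Rightarrow> ('a \<Rightarrow> 'a set) \<Rightarrow> real \<Rightarrow> 'a \<Rightarrow> 'a" where
  "trial_pt A1 A2 B a x = resolvent a B (x - a *\<^sub>R (A1 x + A2 x))"

text \<open>j(k): smallest j satisfying the linesearch condition, with previous step a = \<alpha>_{k-1}.\<close>
definition jstep :: "('a::real_inner \<Rightarrow> 'a) \<Rightarrow> ('a \<Rightarrow> 'a) \<Rightarrow> ('a \<Rightarrow> 'a set) \<Rightarrow> real \<Rightarrow> real \<Rightarrow> real \<Rightarrow> 'a \<Rightarrow> nat" where
  "jstep A1 A2 B \<theta> \<delta> a x = (LEAST j::nat.
     a * \<theta> ^ j * inner (A2 x - A2 (trial_pt A1 A2 B (a * \<theta> ^ j) x)) (x - trial_pt A1 A2 B (a * \<theta> ^ j) x)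
       \<le> \<delta> * (norm (x - trial_pt A1 A2 B (a * \<theta> ^ j) x))\<^sup>2)"

text \<open>Half-space T_k, with \<alpha> = \<alpha>_k and xk = x^k.\<close>
definition T_set :: "('a::real_inner \<Rightarrow> 'a) \<Rightarrow> ('a \<Rightarrow> 'a) \<Rightarrow> ('a \<Rightarrow> 'a set) \<Rightarrow> real \<Rightarrow> real \<Rightarrow> 'a \<Rightarrow> 'a set" where
  "T_set A1 A2 B \<delta>bar \<alpha> xk =
     (let xb = trial_pt A1 A2 B \<alpha> xk;
          r = (\<delta>bar / \<alpha>) * (norm (xk - xb))\<^sup>2
      in {z. inner ((1 / \<alpha>) *\<^sub>R (xk - xb) - (A2 xk - A2 xb)) (z - xb) \<le> r})"

definition Gamma_set :: "'a::real_inner \<Rightarrow> 'a \<Rightarrow> 'a set" where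
  "Gamma_set x0 xk = {z. inner (x0 - xk) (z - xk) \<le> 0}"

end

theory Submission
  imports Defs
begin

lemma proj_exists:
  fixes C :: "'a::{real_inner,complete_space} set"
  assumes "closed C" "convex C" "C \<noteq> {}"
  shows "\<exists>p\<in>C. \<forall>z\<in>C. dist x p \<le> dist x z"
proof -
  define d where "d = infdist x C"
  have d0: "d \<ge> 0" by (simp add: d_def infdist_nonneg)
  have "\<forall>n::nat. \<exists>y\<in>C. dist x y < d + 1 / (real n + 1)"
  proof
    fix n :: nat
    have "0 < 1 / (real n + 1)" by simp
    then show "\<exists>y\<in>C. dist x y < d + 1 / (real n + 1)"
      using assms(3) unfolding d_def infdist_notempty[OF assms(3)]
      by (subst cINF_less_iff[symmetric]) (auto intro: bdd_belowI[where m=0])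
  qed
  then obtain y where y: "\<And>n. y n \<in> C" "\<And>n. dist x (y n) < d + 1 / (real n + 1)"
    by metis
  have dle: "d \<le> dist x z" if "z \<in> C" for z
    using that by (simp add: d_def infdist_le)
  have key: "(norm (y n - y m))\<^sup>2 \<le> 2 * (2*d+1) * (1/(real n + 1) + 1/(real m + 1))" for n m
  proof -
    let ?e = "\<lambda>n::nat. 1 / (real n + 1)"
    have e01: "0 < ?e k" "?e k \<le> 1" for k by (auto simp: field_simps)
    have mid: "(1/2) *\<^sub>R (y n + y m) \<in> C"
    proof -
      have "(1/2) *\<^sub>R y n + (1/2) *\<^sub>R y m \<in> C"
        using assms(2) y(1) by (intro convexD) auto
      then show ?thesis by (simp add: scaleR_add_right)
    qed
    have m: "d \<le> norm (x - (1/2) *\<^sub>R (y n + y m))" using dle[OF mid] by (simp add: dist_norm)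
    have para: "(norm (y n - y m))\<^sup>2 = 2 * (norm (x - y n))\<^sup>2 + 2 * (norm (x - y m))\<^sup>2 - 4 * (norm (x - (1/2) *\<^sub>R (y n + y m)))\<^sup>2"
      by (simp add: power2_norm_eq_inner inner_diff inner_add inner_commute algebra_simps)
    have a: "(norm (x - y k))\<^sup>2 \<le> d\<^sup>2 + (2*d+1) * ?e k" for k
    proof -
      have "norm (x - y k) \<le> d + ?e k" using y(2)[of k] by (simp add: dist_norm)
      moreover have "0 \<le> norm (x - y k)" by simp
      ultimately have "(norm (x - y k))\<^sup>2 \<le> (d + ?e k)\<^sup>2" by (rule power_mono)
      also have "\<dots> = d\<^sup>2 + 2*d*?e k + ?e k * ?e k" by (simp add: power2_eq_square algebra_simps)
      also have "\<dots> \<le> d\<^sup>2 + 2*d*?e k + ?e k"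
        using mult_left_le_one_le[of "?e k" "?e k"] e01[of k] by simp
      finally show ?thesis by (simp add: algebra_simps)
    qed
    have dd: "d\<^sup>2 \<le> (norm (x - (1/2) *\<^sub>R (y n + y m)))\<^sup>2" using m d0 by (simp add: power_mono)
    have e: "2 * (2*d+1) * (?e n + ?e m) = 2*((2*d+1) * ?e n) + 2*((2*d+1) * ?e m)"
      by (simp add: algebra_simps)
    show ?thesis unfolding e using para a[of n] a[of m] dd by linarith
  qed
  have cauchy: "Cauchy y"
  proof (rule metric_CauchyI)
    fix e :: real assume e: "e > 0"
    obtain N :: nat where N: "4 * (2*d+1) / e\<^sup>2 < real N"
      using reals_Archimedean2 by blast
    show "\<exists>M. \<forall>m\<ge>M. \<forall>n\<ge>M. dist (y m) (y n) < e"
    proof (intro exI[of _ N] allI impI)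
      fix m n assume mn: "m \<ge> N" "n \<ge> N"
      have "1/(real n + 1) \<le> 1/(real N + 1)" using mn by (intro divide_left_mono) auto
      moreover have "1/(real m + 1) \<le> 1/(real N + 1)" using mn by (intro divide_left_mono) auto
      ultimately
      have "1/(real m + 1) + 1/(real n + 1) \<le> 2/(real N + 1)" by simp
      then have "2 * (2*d+1) * (1/(real m + 1) + 1/(real n + 1)) \<le> 2 * (2*d+1) * (2/(real N + 1))"
        using d0 by (intro mult_left_mono) auto
      then have "(norm (y m - y n))\<^sup>2 \<le> 2 * (2*d+1) * (2/(real N + 1))"
        using key[of m n] by linarith
      also have "\<dots> < e\<^sup>2"
      proof -
        have "4 * (2*d+1) < e\<^sup>2 * real N" using N e by (simp add: field_simps)
        moreover have "e\<^sup>2 * real N \<le> e\<^sup>2 * (real N + 1)" by (simp add: distrib_left)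
        ultimately have "4 * (2*d+1) < e\<^sup>2 * (real N + 1)" by linarith
        then show ?thesis by (simp add: field_simps)
      qed
      finally have "(norm (y m - y n))\<^sup>2 < e\<^sup>2" .
      then have "norm (y m - y n) < e" by (rule power_less_imp_less_base) (use e in simp)
      then show "dist (y m) (y n) < e" by (simp add: dist_norm)
    qed
  qed
  then have "convergent y" by (simp add: Cauchy_convergent_iff)
  then obtain p where p: "y \<longlonglongrightarrow> p" unfolding convergent_def by blast
  have pC: "p \<in> C" using closed_sequentially[OF assms(1) y(1) p] .
  have "(\<lambda>n. dist x (y n)) \<longlonglongrightarrow> dist x p" using p by (intro tendsto_dist tendsto_const)
  moreover have "(\<lambda>n. 1 / (real n + 1)) \<longlonglongrightarrow> 0"
    using LIMSEQ_inverse_real_of_nat by (simp add: inverse_eq_divide add.commute)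
  then have "(\<lambda>n. d + 1 / (real n + 1)) \<longlonglongrightarrow> d + 0"
    by (intro tendsto_add tendsto_const)
  ultimately have "dist x p \<le> d + 0"
    using y(2) less_imp_le by (intro LIMSEQ_le) blast+
  then have "\<forall>z\<in>C. dist x p \<le> dist x z" using dle by fastforce
  then show ?thesis using pC by blast
qed


lemma nsq_diff: "(norm (a - b))\<^sup>2 = (norm a)\<^sup>2 - 2 * inner a b + (norm (b::'a::real_inner))\<^sup>2"
  by (simp add: power2_norm_eq_inner inner_diff inner_commute)

lemma nsq_add: "(norm (a + b))\<^sup>2 = (norm a)\<^sup>2 + 2 * inner a b + (norm (b::'a::real_inner))\<^sup>2"
  by (simp add: power2_norm_eq_inner inner_add inner_commute)

lemma min_imp_char:
  fixes C :: "'a::real_inner set"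
  assumes "convex C" "p \<in> C" "\<forall>z\<in>C. dist x p \<le> dist x z" "z \<in> C"
  shows "inner (x - p) (z - p) \<le> 0"
proof (rule ccontr)
  assume "\<not> ?thesis"
  then have s: "inner (x - p) (z - p) > 0" by simp
  define q where "q = z - p"
  define s where "s = inner (x - p) q"
  have s0: "s > 0" using s by (simp add: s_def q_def)
  have q0: "q \<noteq> 0" using s0 by (auto simp: s_def)
  then have nq: "(norm q)\<^sup>2 > 0" by simp
  have gen: "2 * s \<le> t * (norm q)\<^sup>2" if t: "0 < t" "t \<le> 1" for t
  proof -
    have "(1 - t) *\<^sub>R p + t *\<^sub>R z \<in> C" using assms(1,2,4) t by (intro convexD) auto
    moreover have "(1 - t) *\<^sub>R p + t *\<^sub>R z = p + t *\<^sub>R q" by (simp add: q_def algebra_simps)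
    ultimately have "dist x p \<le> dist x (p + t *\<^sub>R q)" using assms(3) by metis
    then have "(norm (x - p))\<^sup>2 \<le> (norm (x - p - t *\<^sub>R q))\<^sup>2"
      by (simp add: dist_norm power_mono diff_diff_eq)
    also have "\<dots> = (norm (x - p))\<^sup>2 - 2 * t * s + t\<^sup>2 * (norm q)\<^sup>2"
      using nsq_diff[of "x - p" "t *\<^sub>R q"] by (simp add: s_def power_mult_distrib)
    finally have "2 * t * s \<le> t * (t * (norm q)\<^sup>2)" by (simp add: power2_eq_square algebra_simps)
    then show ?thesis using t by (simp add: mult.assoc)
  qed
  show False
  proof (cases "s \<le> (norm q)\<^sup>2")
    case True
    define t where "t = s / (norm q)\<^sup>2"
    have "0 < t" "t \<le> 1" using True s0 nq by (auto simp: t_def field_simps)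
    then have "2 * s \<le> t * (norm q)\<^sup>2" by (rule gen)
    also have "\<dots> = s" using nq by (simp add: t_def)
    finally show False using s0 by simp
  next
    case False
    have "2 * s \<le> 1 * (norm q)\<^sup>2" by (rule gen) auto
    then show False using False s0 by simp
  qed
qed

lemma char_imp_min:
  fixes C :: "'a::real_inner set"
  assumes "\<forall>z\<in>C. inner (x - p) (z - p) \<le> 0" "z \<in> C"
  shows "dist x p \<le> dist x z"
proof -
  have "(norm (x - z))\<^sup>2 = (norm ((x - p) - (z - p)))\<^sup>2" by simp
  also have "\<dots> = (norm (x - p))\<^sup>2 - 2 * inner (x - p) (z - p) + (norm (z - p))\<^sup>2"
    by (rule nsq_diff)
  finally have "(norm (x - z))\<^sup>2 = (norm (x - p))\<^sup>2 - 2 * inner (x - p) (z - p) + (norm (z - p))\<^sup>2" .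
  moreover have "inner (x - p) (z - p) \<le> 0" using assms by blast
  ultimately have "(norm (x - p))\<^sup>2 \<le> (norm (x - z))\<^sup>2" using zero_le_power2[of "norm (z - p)"] by linarith
  then have "norm (x - p) \<le> norm (x - z)" by (rule power2_le_imp_le) simp
  then show ?thesis by (simp add: dist_norm)
qed

lemma proj_props:
  fixes C :: "'a::{real_inner,complete_space} set"
  assumes "closed C" "convex C" "C \<noteq> {}"
  shows "proj C x \<in> C" "\<forall>z\<in>C. dist x (proj C x) \<le> dist x z"
    "\<forall>z\<in>C. inner (x - proj C x) (z - proj C x) \<le> 0"
proof -
  have ex: "\<exists>p. p \<in> C \<and> (\<forall>z\<in>C. dist x p \<le> dist x z)" using proj_exists[OF assms] by blast
  have *: "proj C x \<in> C \<and> (\<forall>z\<in>C. dist x (proj C x) \<le> dist x z)"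
    unfolding proj_def by (rule someI_ex[OF ex])
  then show "proj C x \<in> C" "\<forall>z\<in>C. dist x (proj C x) \<le> dist x z" by auto
  show "\<forall>z\<in>C. inner (x - proj C x) (z - proj C x) \<le> 0"
    using * assms(2) min_imp_char by blast
qed


lemma hilbert_fip:
  fixes KK :: "'a::{real_inner,complete_space} set set"
  assumes cc: "\<And>K. K \<in> KK \<Longrightarrow> closed K \<and> convex K"
    and K0: "K0 \<in> KK" "bounded K0"
    and fin: "\<And>F. finite F \<Longrightarrow> F \<subseteq> KK \<Longrightarrow> \<Inter>F \<noteq> {}"
  shows "\<Inter>KK \<noteq> {}"
proof -
  define I where "I F = \<Inter>(insert K0 F)" for F
  define P where "P F = proj (I F) 0" for F
  define FF where "FF = {F. finite F \<and> F \<subseteq> KK}"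
  have Iprops: "closed (I F) \<and> convex (I F) \<and> I F \<noteq> {}" if F: "F \<in> FF" for F
  proof -
    have sub: "insert K0 F \<subseteq> KK" using F K0 by (auto simp: FF_def)
    have "closed (I F)" unfolding I_def using sub cc by (intro closed_Inter) blast
    moreover have "convex (I F)" unfolding I_def using sub cc by (intro convex_Inter) blast
    moreover have "I F \<noteq> {}" unfolding I_def using F sub by (intro fin) (auto simp: FF_def)
    ultimately show ?thesis by blast
  qed
  have Pin: "P F \<in> I F" if "F \<in> FF" for F
    using proj_props(1)[of "I F" 0] Iprops[OF that] by (simp add: P_def)
  have Pmin: "norm (P F) \<le> norm z" if "F \<in> FF" "z \<in> I F" for F z
    using proj_props(2)[of "I F" 0] Iprops[OF that(1)] that(2) by (simp add: P_def dist_norm)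
  have Pchar: "inner (0 - P F) (z - P F) \<le> 0" if "F \<in> FF" "z \<in> I F" for F z
    using proj_props(3)[of "I F" 0] Iprops[OF that(1)] that(2) by (simp add: P_def)
  obtain M where M: "\<And>z. z \<in> K0 \<Longrightarrow> norm z \<le> M" using K0(2) by (auto simp: bounded_iff)
  have Pbd: "norm (P F) \<le> M" if "F \<in> FF" for F
    using Pin[OF that] M by (auto simp: I_def)
  have mono: "(norm (P G - P F))\<^sup>2 \<le> (norm (P G))\<^sup>2 - (norm (P F))\<^sup>2"
    if FG: "F \<in> FF" "G \<in> FF" "F \<subseteq> G" for F G
  proof -
    have "I G \<subseteq> I F" unfolding I_def by (rule Inter_anti_mono) (use FG(3) in blast)
    then have "P G \<in> I F" using Pin[OF FG(2)] by (rule subsetD)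
    then have c: "inner (0 - P F) (P G - P F) \<le> 0" by (rule Pchar[OF FG(1)])
    have "(norm (P F + (P G - P F)))\<^sup>2 = (norm (P F))\<^sup>2 + 2 * inner (P F) (P G - P F) + (norm (P G - P F))\<^sup>2"
      by (rule nsq_add)
    then have "(norm (P G))\<^sup>2 = (norm (P F))\<^sup>2 + 2 * inner (P F) (P G - P F) + (norm (P G - P F))\<^sup>2"
      by simp
    moreover have "inner (P F) (P G - P F) \<ge> 0" using c by simp
    ultimately show ?thesis by linarith
  qed
  define D where "D = Sup ((\<lambda>F. norm (P F)) ` FF)"
  have FFne: "{} \<in> FF" by (simp add: FF_def)
  have bdd: "bdd_above ((\<lambda>F. norm (P F)) ` FF)"
    by (rule bdd_aboveI[where M=M]) (use Pbd in blast)
  have leD: "norm (P F) \<le> D" if "F \<in> FF" for F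
    unfolding D_def by (rule cSup_upper[OF imageI[OF that] bdd])
  have D0: "0 \<le> D" using leD[OF FFne] norm_ge_zero[of "P {}"] by linarith
  have "\<forall>n::nat. \<exists>F\<in>FF. D - 1/(real n + 1) < norm (P F)"
  proof
    fix n :: nat
    have "D - 1/(real n + 1) < D" by simp
    moreover have ne: "(\<lambda>F. norm (P F)) ` FF \<noteq> {}" using FFne by blast
    ultimately have "\<exists>r\<in>(\<lambda>F. norm (P F)) ` FF. D - 1/(real n + 1) < r"
      unfolding D_def less_cSup_iff[OF ne bdd] by simp
    then show "\<exists>F\<in>FF. D - 1/(real n + 1) < norm (P F)" by (simp add: image_iff)
  qed
  then obtain Fs where Fs: "\<And>n. Fs n \<in> FF" "\<And>n. D - 1/(real n + 1) < norm (P (Fs n))" by metis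
  define G where "G n = \<Union>(Fs ` {..n})" for n
  have GFF: "G n \<in> FF" for n using Fs(1) by (auto simp: G_def FF_def)
  have Gmono: "G m \<subseteq> G n" if "m \<le> n" for m n
    unfolding G_def using that by (intro Union_mono image_mono) auto
  have FsG: "Fs n \<subseteq> G n" for n by (auto simp: G_def)
  define s where "s n = sqrt (2 * D * (1/(real n + 1)))" for n :: nat
  have key: "norm (P H - P (G n)) \<le> s n" if H: "H \<in> FF" "G n \<subseteq> H" for H n
  proof -
    define a where "a = norm (P (G n))"
    define e where "e = 1/(real n + 1)"
    have e0: "e > 0" by (simp add: e_def)
    have a1: "D - e < a" using Fs(2)[of n] mono[OF Fs(1) GFF FsG] 
    proof -
      have "norm (P (Fs n)) \<le> a"
      proof -
        have "I (G n) \<subseteq> I (Fs n)" using FsG[of n] by (auto simp: I_def)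
        then show ?thesis unfolding a_def using Pin[OF GFF] by (intro Pmin[OF Fs(1)]) blast
      qed
      then show ?thesis using Fs(2)[of n] by (simp add: e_def)
    qed
    have a2: "a \<le> D" unfolding a_def by (rule leD[OF GFF])
    have a0: "0 \<le> a" by (simp add: a_def)
    have "(norm (P H - P (G n)))\<^sup>2 \<le> (norm (P H))\<^sup>2 - a\<^sup>2" unfolding a_def by (rule mono[OF GFF H(1) H(2)])
    also have "\<dots> \<le> D\<^sup>2 - a\<^sup>2" using leD[OF H(1)] by (simp add: power_mono)
    also have "\<dots> = (D - a) * (D + a)" by (simp add: power2_eq_square algebra_simps)
    also have "\<dots> \<le> e * (2 * D)" using a1 a2 a0 D0 e0 by (intro mult_mono) auto
    finally have "(norm (P H - P (G n)))\<^sup>2 \<le> 2 * D * e" by (simp add: algebra_simps)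
    then show ?thesis unfolding s_def e_def[symmetric] by (rule real_le_rsqrt)
  qed
  have s0: "s \<longlonglongrightarrow> 0"
  proof -
    have "(\<lambda>n. 1 / (real n + 1)) \<longlonglongrightarrow> 0"
      using LIMSEQ_inverse_real_of_nat by (simp add: inverse_eq_divide add.commute)
    then have "(\<lambda>n. sqrt (2 * D * (1/(real n + 1)))) \<longlonglongrightarrow> sqrt (2 * D * 0)"
      by (intro tendsto_real_sqrt tendsto_mult tendsto_const)
    then show ?thesis unfolding s_def by simp
  qed
  have "Cauchy (\<lambda>n. P (G n))"
  proof (rule metric_CauchyI)
    fix e :: real assume e: "e > 0"
    have "\<forall>\<^sub>F n in sequentially. s n < e / 2" using s0 e by (intro order_tendstoD(2)) auto
    then obtain N where N: "s N < e / 2" by (auto simp: eventually_sequentially)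
    show "\<exists>M. \<forall>m\<ge>M. \<forall>n\<ge>M. dist (P (G m)) (P (G n)) < e"
    proof (intro exI[of _ N] allI impI)
      fix m n assume mn: "N \<le> m" "N \<le> n"
      have "dist (P (G m)) (P (G n)) \<le> norm (P (G m) - P (G N)) + norm (P (G n) - P (G N))"
        using dist_triangle2[of "P (G m)" "P (G n)" "P (G N)"] by (simp add: dist_norm)
      also have "\<dots> \<le> s N + s N" using key[OF GFF Gmono[OF mn(1)]] key[OF GFF Gmono[OF mn(2)]] by simp
      finally show "dist (P (G m)) (P (G n)) < e" using N by simp
    qed
  qed
  then have "convergent (\<lambda>n. P (G n))" by (simp add: Cauchy_convergent_iff)
  then obtain p where p: "(\<lambda>n. P (G n)) \<longlonglongrightarrow> p" unfolding convergent_def by blast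
  have "p \<in> K" if K: "K \<in> KK" for K
  proof -
    define H where "H n = insert K (G n)" for n
    have HFF: "H n \<in> FF" for n using GFF[of n] K by (simp add: H_def FF_def)
    have HK: "P (H n) \<in> K" for n
    proof -
      have "I (H n) \<subseteq> K" unfolding I_def H_def by blast
      then show ?thesis using Pin[OF HFF[of n]] by (rule subsetD)
    qed
    have kk: "norm (P (H n) - P (G n)) \<le> s n" for n
      by (rule key[of "H n" n, OF HFF]) (simp add: H_def subset_insertI)
    have "(\<lambda>n. P (H n) - P (G n)) \<longlonglongrightarrow> 0"
      by (rule Lim_null_comparison[OF always_eventually[OF allI[OF kk]] s0])
    then have "(\<lambda>n. (P (H n) - P (G n)) + P (G n)) \<longlonglongrightarrow> 0 + p" using p by (rule tendsto_add)
    then have "(\<lambda>n. P (H n)) \<longlonglongrightarrow> p" by simp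
    then show "p \<in> K" by (rule closed_sequentially[OF cc[OF K, THEN conjunct1] HK])
  qed
  then have "p \<in> \<Inter>KK" by (rule InterI)
  then show ?thesis by (rule ex_in_conv[THEN iffD1, OF exI])
qed


lemma continuous_on_Max_fam:
  fixes g :: "'i \<Rightarrow> 'a::topological_space \<Rightarrow> real"
  assumes "finite S" "S \<noteq> {}" "\<And>i. i \<in> S \<Longrightarrow> continuous_on K (g i)"
  shows "continuous_on K (\<lambda>x. Max ((\<lambda>i. g i x) ` S))"
  using assms
proof (induction S rule: finite_ne_induct)
  case (singleton i)
  then show ?case by simp
next
  case (insert i F)
  have eq: "(\<lambda>x. Max ((\<lambda>i. g i x) ` insert i F)) = (\<lambda>x. max (g i x) (Max ((\<lambda>i. g i x) ` F)))"
    using insert.hyps(1,2) by (simp add: Max_insert)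
  show ?case unfolding eq
    by (rule continuous_on_max) (use insert.prems insert.IH in auto)
qed

lemma hull_weights:
  fixes c :: "'i \<Rightarrow> 'a::real_vector"
  assumes "finite I" "x \<in> convex hull (c ` I)"
  shows "\<exists>\<mu>. (\<forall>i\<in>I. 0 \<le> \<mu> i) \<and> sum \<mu> I = 1 \<and> x = (\<Sum>i\<in>I. \<mu> i *\<^sub>R c i)"
proof -
  define W where "W = {y. \<exists>\<mu>. (\<forall>i\<in>I. 0 \<le> \<mu> i) \<and> sum \<mu> I = 1 \<and> y = (\<Sum>i\<in>I. \<mu> i *\<^sub>R c i)}"
  have sub: "c ` I \<subseteq> W"
  proof
    fix y assume "y \<in> c ` I"
    then obtain i where i: "i \<in> I" "y = c i" by blast
    define \<mu> where "\<mu> j = (if j = i then 1 else (0::real))" for j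
    have "sum \<mu> I = 1" unfolding \<mu>_def using assms(1) i(1) by (simp add: sum.delta')
    moreover have "(\<Sum>j\<in>I. \<mu> j *\<^sub>R c j) = c i"
    proof -
      have "(\<Sum>j\<in>I. \<mu> j *\<^sub>R c j) = (\<Sum>j\<in>I. if j = i then c j else 0)"
        by (rule sum.cong) (auto simp: \<mu>_def)
      also have "\<dots> = c i" using assms(1) i(1) by (simp add: sum.delta')
      finally show ?thesis .
    qed
    moreover have "\<forall>j\<in>I. 0 \<le> \<mu> j" by (simp add: \<mu>_def)
    ultimately have "(\<forall>j\<in>I. 0 \<le> \<mu> j) \<and> sum \<mu> I = 1 \<and> y = (\<Sum>j\<in>I. \<mu> j *\<^sub>R c j)"
      using i(2) by simp
    then have "\<exists>\<mu>. (\<forall>j\<in>I. 0 \<le> \<mu> j) \<and> sum \<mu> I = 1 \<and> y = (\<Sum>j\<in>I. \<mu> j *\<^sub>R c j)"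
      by (rule exI[where x=\<mu>])
    then show "y \<in> W" unfolding W_def by (rule CollectI)
  qed
  have cvx: "convex W"
  proof (rule convexI)
    fix y1 y2 :: 'a and u v :: real
    assume y: "y1 \<in> W" "y2 \<in> W" and uv: "0 \<le> u" "0 \<le> v" "u + v = 1"
    obtain \<mu>1 where m1: "\<forall>i\<in>I. 0 \<le> \<mu>1 i" "sum \<mu>1 I = 1" "y1 = (\<Sum>i\<in>I. \<mu>1 i *\<^sub>R c i)"
      using y(1) unfolding W_def by blast
    obtain \<mu>2 where m2: "\<forall>i\<in>I. 0 \<le> \<mu>2 i" "sum \<mu>2 I = 1" "y2 = (\<Sum>i\<in>I. \<mu>2 i *\<^sub>R c i)"
      using y(2) unfolding W_def by blast
    define \<mu> where "\<mu> i = u * \<mu>1 i + v * \<mu>2 i" for i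
    have "\<forall>i\<in>I. 0 \<le> \<mu> i" using m1(1) m2(1) uv unfolding \<mu>_def by simp
    moreover have "sum \<mu> I = 1"
      unfolding \<mu>_def sum.distrib sum_distrib_left[symmetric] m1(2) m2(2) using uv(3) by simp
    moreover have "u *\<^sub>R y1 + v *\<^sub>R y2 = (\<Sum>i\<in>I. \<mu> i *\<^sub>R c i)"
      unfolding \<mu>_def m1(3) m2(3) scaleR_add_left sum.distrib scaleR_sum_right scaleR_scaleR by simp
    ultimately show "u *\<^sub>R y1 + v *\<^sub>R y2 \<in> W" unfolding W_def by blast
  qed
  have "convex hull (c ` I) \<subseteq> W" using sub cvx by (rule hull_minimal)
  then show ?thesis using assms(2) unfolding W_def by blast
qed

lemma var_id:
  fixes a :: "'i \<Rightarrow> 'a::real_inner"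
  assumes "sum \<mu> I = 1"
  shows "(\<Sum>i\<in>I. \<mu> i * (norm (x - a i))\<^sup>2)
    = (\<Sum>i\<in>I. \<mu> i * (norm (a i))\<^sup>2) - 2 * inner x (\<Sum>i\<in>I. \<mu> i *\<^sub>R a i) + (norm x)\<^sup>2"
proof -
  have "(\<Sum>i\<in>I. \<mu> i * (norm (x - a i))\<^sup>2)
      = (\<Sum>i\<in>I. \<mu> i * (norm (a i))\<^sup>2 - 2 * (\<mu> i * inner x (a i)) + \<mu> i * (norm x)\<^sup>2)"
    by (rule sum.cong) (simp_all add: nsq_diff algebra_simps)
  also have "\<dots> = (\<Sum>i\<in>I. \<mu> i * (norm (a i))\<^sup>2) - 2 * (\<Sum>i\<in>I. \<mu> i * inner x (a i))
      + (\<Sum>i\<in>I. \<mu> i) * (norm x)\<^sup>2"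
    by (simp add: sum.distrib sum_subtractf sum_distrib_left sum_distrib_right)
  also have "(\<Sum>i\<in>I. \<mu> i * inner x (a i)) = inner x (\<Sum>i\<in>I. \<mu> i *\<^sub>R a i)"
    by (simp add: inner_sum_right)
  finally show ?thesis using assms by simp
qed

lemma dbl_id:
  fixes a :: "'i \<Rightarrow> 'a::real_inner"
  assumes "sum \<mu> I = 1"
  shows "(\<Sum>i\<in>I. \<Sum>j\<in>I. \<mu> i * \<mu> j * (norm (a i - a j))\<^sup>2)
    = 2 * ((\<Sum>i\<in>I. \<mu> i * (norm (a i))\<^sup>2) - (norm (\<Sum>i\<in>I. \<mu> i *\<^sub>R a i))\<^sup>2)"
proof -
  define m where "m = (\<Sum>i\<in>I. \<mu> i *\<^sub>R a i)"
  define Q where "Q = (\<Sum>i\<in>I. \<mu> i * (norm (a i))\<^sup>2)"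
  have inner_sum: "(\<Sum>j\<in>I. \<mu> j * (norm (a i - a j))\<^sup>2) = Q - 2 * inner (a i) m + (norm (a i))\<^sup>2" for i
    unfolding Q_def m_def by (rule var_id[OF assms])
  have "(\<Sum>i\<in>I. \<Sum>j\<in>I. \<mu> i * \<mu> j * (norm (a i - a j))\<^sup>2)
      = (\<Sum>i\<in>I. \<mu> i * (\<Sum>j\<in>I. \<mu> j * (norm (a i - a j))\<^sup>2))"
    by (simp add: sum_distrib_left mult.assoc)
  also have "\<dots> = (\<Sum>i\<in>I. \<mu> i * Q - 2 * (\<mu> i * inner (a i) m) + \<mu> i * (norm (a i))\<^sup>2)"
    unfolding inner_sum by (simp add: algebra_simps)
  also have "\<dots> = Q - 2 * (\<Sum>i\<in>I. \<mu> i * inner (a i) m) + Q"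
    by (simp add: sum.distrib sum_subtractf sum_distrib_left[symmetric] sum_distrib_right[symmetric] assms Q_def)
  also have "(\<Sum>i\<in>I. \<mu> i * inner (a i) m) = inner m m"
    by (simp add: m_def inner_sum_left)
  finally show ?thesis by (simp add: Q_def m_def power2_norm_eq_inner)
qed


lemma kirsz_finite:
  fixes c z :: "'i \<Rightarrow> 'a::{real_inner,complete_space}"
  assumes S: "finite S" and lip: "\<And>i j. i \<in> S \<Longrightarrow> j \<in> S \<Longrightarrow> norm (c i - c j) \<le> norm (z i - z j)"
  shows "\<exists>x. \<forall>i\<in>S. norm (x - c i) \<le> norm (z i)"
proof (cases "S = {}")
  case True
  then show ?thesis by simp
next
  case False
  define f where "f i x = (norm (x - c i))\<^sup>2 - (norm (z i))\<^sup>2" for i x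
  define \<phi> where "\<phi> x = Max ((\<lambda>i. f i x) ` S)" for x
  define K where "K = convex hull (c ` S)"
  have Kc: "compact K" unfolding K_def using S by (intro finite_imp_compact_convex_hull) simp
  have Kne: "K \<noteq> {}" unfolding K_def using False by simp
  have Kcvx: "convex K" unfolding K_def by (rule convex_convex_hull)
  have fcont: "continuous_on K (f i)" for i unfolding f_def by (intro continuous_intros)
  have cont: "continuous_on K \<phi>" unfolding \<phi>_def by (rule continuous_on_Max_fam[OF S False fcont])
  obtain x where xK: "x \<in> K" and xmin: "\<And>y. y \<in> K \<Longrightarrow> \<phi> x \<le> \<phi> y"
    using continuous_attains_inf[OF Kc Kne cont] by blast
  define m where "m = \<phi> x"
  have finim: "finite ((\<lambda>i. f i x) ` S)" using S by simp
  have neim: "(\<lambda>i. f i x) ` S \<noteq> {}" using False by simp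
  have fle: "f i x \<le> m" if "i \<in> S" for i
    unfolding m_def \<phi>_def using finim that by (intro Max_ge) simp_all
  have "m \<le> 0"
  proof (rule ccontr)
    assume "\<not> m \<le> 0"
    then have m0: "m > 0" by simp
    define I where "I = {i\<in>S. f i x = m}"
    have IS: "I \<subseteq> S" by (auto simp: I_def)
    have If: "finite I" using S IS by (rule finite_subset[rotated])
    have "m \<in> (\<lambda>i. f i x) ` S" unfolding m_def \<phi>_def using finim neim by (rule Max_in)
    then have Ine: "I \<noteq> {}" by (auto simp: I_def)
    have xC: "x \<in> convex hull (c ` I)"
    proof (rule ccontr)
      assume nx: "x \<notin> convex hull (c ` I)"
      define C where "C = convex hull (c ` I)"
      have Ccl: "closed C" unfolding C_def using If
        by (intro compact_imp_closed finite_imp_compact_convex_hull) simp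
      have Ccvx: "convex C" unfolding C_def by (rule convex_convex_hull)
      have Cne: "C \<noteq> {}" unfolding C_def using Ine by simp
      define p where "p = proj C x"
      have pC: "p \<in> C" unfolding p_def by (rule proj_props(1)[OF Ccl Ccvx Cne])
      have pchar: "\<And>w. w \<in> C \<Longrightarrow> inner (x - p) (w - p) \<le> 0"
        using proj_props(3)[OF Ccl Ccvx Cne, of x] unfolding p_def by blast
      define d where "d = p - x"
      have d0: "d \<noteq> 0" using pC nx unfolding d_def C_def by auto
      then have nd: "(norm d)\<^sup>2 > 0" by simp
      have act: "inner d (c i - x) \<ge> (norm d)\<^sup>2" if "i \<in> I" for i
      proof -
        have "c i \<in> C" unfolding C_def using that by (intro hull_inc imageI)
        then have "inner (x - p) (c i - p) \<le> 0" by (rule pchar)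
        moreover have "inner d (c i - x) = - inner (x - p) (c i - p) + inner d d"
          unfolding d_def by (simp add: inner_diff_left inner_diff_right inner_commute)
        ultimately show ?thesis by (simp add: power2_norm_eq_inner)
      qed
      have ft: "f i (x + t *\<^sub>R d) = f i x - 2 * t * inner d (c i - x) + t\<^sup>2 * (norm d)\<^sup>2" for i t
      proof -
        have "(norm (x + t *\<^sub>R d - c i))\<^sup>2 = (norm ((x - c i) + t *\<^sub>R d))\<^sup>2" by (simp add: algebra_simps)
        also have "\<dots> = (norm (x - c i))\<^sup>2 + 2 * inner (x - c i) (t *\<^sub>R d) + (norm (t *\<^sub>R d))\<^sup>2"
          by (rule nsq_add)
        also have "inner (x - c i) (t *\<^sub>R d) = - t * inner d (c i - x)"
          by (simp add: inner_diff_left inner_diff_right inner_commute, simp add: algebra_simps)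
        also have "(norm (t *\<^sub>R d))\<^sup>2 = t\<^sup>2 * (norm d)\<^sup>2" by (simp add: power_mult_distrib)
        finally show ?thesis unfolding f_def by simp
      qed
      have evi: "\<forall>\<^sub>F t in at_right 0. f i (x + t *\<^sub>R d) < m" if iS: "i \<in> S" for i
      proof (cases "i \<in> I")
        case True
        have fi: "f i x = m" using True by (simp add: I_def)
        have "\<forall>\<^sub>F t in at_right (0::real). 0 < t \<and> t < 1"
          by (simp add: eventually_at_right_field) (rule exI[of _ 1], simp)
        then show ?thesis
        proof (rule eventually_mono)
          fix t :: real assume t: "0 < t \<and> t < 1"
          have "t * (norm d)\<^sup>2 < 2 * (norm d)\<^sup>2"
            using t nd by (intro mult_strict_right_mono) auto
          then have "t * (t * (norm d)\<^sup>2) < t * (2 * (norm d)\<^sup>2)"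
            using t by (intro mult_strict_left_mono) auto
          moreover have "t\<^sup>2 * (norm d)\<^sup>2 = t * (t * (norm d)\<^sup>2)" by (simp add: power2_eq_square)
          moreover have "2 * t * (norm d)\<^sup>2 = t * (2 * (norm d)\<^sup>2)" by simp
          ultimately have "t\<^sup>2 * (norm d)\<^sup>2 < 2 * t * (norm d)\<^sup>2" by linarith
          moreover have "2 * t * (norm d)\<^sup>2 \<le> 2 * t * inner d (c i - x)"
            using act[OF True] t by simp
          ultimately show "f i (x + t *\<^sub>R d) < m" unfolding ft fi by linarith
        qed
      next
        case False
        have lt: "f i x < m" using fle[OF iS] False iS by (auto simp: I_def)
        have "((\<lambda>t. f i (x + t *\<^sub>R d)) \<longlongrightarrow> f i (x + 0 *\<^sub>R d)) (at_right 0)"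
          unfolding f_def by (intro tendsto_intros)
        then have "((\<lambda>t. f i (x + t *\<^sub>R d)) \<longlongrightarrow> f i x) (at_right 0)" by simp
        from order_tendstoD(2)[OF this lt] show ?thesis .
      qed
      have "\<forall>\<^sub>F t in at_right (0::real). (\<forall>i\<in>S. f i (x + t *\<^sub>R d) < m) \<and> (0 < t \<and> t < 1)"
      proof (rule eventually_conj)
        show "\<forall>\<^sub>F t in at_right (0::real). \<forall>i\<in>S. f i (x + t *\<^sub>R d) < m"
          using S evi by (intro eventually_ball_finite ballI) auto
        show "\<forall>\<^sub>F t in at_right (0::real). 0 < t \<and> t < 1"
          by (simp add: eventually_at_right_field) (rule exI[of _ 1], simp)
      qed
      then obtain t where t: "\<forall>i\<in>S. f i (x + t *\<^sub>R d) < m" "0 < t" "t < 1"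
        using eventually_happens[of _ "at_right (0::real)"] by (auto simp: trivial_limit_at_right_real)
      have pK: "p \<in> K" using pC IS unfolding C_def K_def by (meson hull_mono image_mono subsetD)
      have "(1 - t) *\<^sub>R x + t *\<^sub>R p \<in> K" using Kcvx xK pK t by (intro convexD) auto
      moreover have "(1 - t) *\<^sub>R x + t *\<^sub>R p = x + t *\<^sub>R d" by (simp add: d_def algebra_simps)
      ultimately have yK: "x + t *\<^sub>R d \<in> K" by simp
      have "\<phi> (x + t *\<^sub>R d) < m"
        unfolding \<phi>_def using S False t(1) by (simp add: Max_less_iff)
      with xmin[OF yK] show False unfolding m_def by simp
    qed
    obtain \<mu> where mu: "\<forall>i\<in>I. 0 \<le> \<mu> i" "sum \<mu> I = 1" "x = (\<Sum>i\<in>I. \<mu> i *\<^sub>R c i)"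
      using hull_weights[OF If xC] by blast
    have "(\<Sum>i\<in>I. \<mu> i * f i x) = (\<Sum>i\<in>I. \<mu> i * m)"
      by (rule sum.cong) (simp_all add: I_def)
    also have "\<dots> = m" using mu(2) by (simp add: sum_distrib_right[symmetric])
    finally have sm: "(\<Sum>i\<in>I. \<mu> i * f i x) = m" .
    define Qc where "Qc = (\<Sum>i\<in>I. \<mu> i * (norm (c i))\<^sup>2)"
    define Qz where "Qz = (\<Sum>i\<in>I. \<mu> i * (norm (z i))\<^sup>2)"
    have "(\<Sum>i\<in>I. \<mu> i * f i x) = (\<Sum>i\<in>I. \<mu> i * (norm (x - c i))\<^sup>2) - Qz"
      unfolding f_def Qz_def by (simp add: right_diff_distrib sum_subtractf)
    also have "(\<Sum>i\<in>I. \<mu> i * (norm (x - c i))\<^sup>2) = Qc - 2 * inner x x + (norm x)\<^sup>2"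
      unfolding Qc_def using var_id[OF mu(2), of x c] mu(3) by simp
    also have "\<dots> = Qc - (norm x)\<^sup>2" by (simp add: power2_norm_eq_inner)
    finally have e1: "m = Qc - (norm x)\<^sup>2 - Qz" using sm by simp
    have dc: "(\<Sum>i\<in>I. \<Sum>j\<in>I. \<mu> i * \<mu> j * (norm (c i - c j))\<^sup>2) = 2 * (Qc - (norm x)\<^sup>2)"
      unfolding Qc_def mu(3) by (rule dbl_id[OF mu(2)])
    have dz: "(\<Sum>i\<in>I. \<Sum>j\<in>I. \<mu> i * \<mu> j * (norm (z i - z j))\<^sup>2) = 2 * (Qz - (norm (\<Sum>i\<in>I. \<mu> i *\<^sub>R z i))\<^sup>2)"
      unfolding Qz_def by (rule dbl_id[OF mu(2)])
    have "(\<Sum>i\<in>I. \<Sum>j\<in>I. \<mu> i * \<mu> j * (norm (c i - c j))\<^sup>2) \<le> (\<Sum>i\<in>I. \<Sum>j\<in>I. \<mu> i * \<mu> j * (norm (z i - z j))\<^sup>2)"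
    proof (rule sum_mono, rule sum_mono)
      fix i j assume ij: "i \<in> I" "j \<in> I"
      then have "norm (c i - c j) \<le> norm (z i - z j)" using IS by (intro lip) auto
      then have "(norm (c i - c j))\<^sup>2 \<le> (norm (z i - z j))\<^sup>2" by (simp add: power_mono)
      moreover have "0 \<le> \<mu> i * \<mu> j" using mu(1) ij by simp
      ultimately show "\<mu> i * \<mu> j * (norm (c i - c j))\<^sup>2 \<le> \<mu> i * \<mu> j * (norm (z i - z j))\<^sup>2"
        by (rule mult_left_mono)
    qed
    then have "Qc - (norm x)\<^sup>2 \<le> Qz - (norm (\<Sum>i\<in>I. \<mu> i *\<^sub>R z i))\<^sup>2" unfolding dc dz by simp
    then have "m \<le> - (norm (\<Sum>i\<in>I. \<mu> i *\<^sub>R z i))\<^sup>2" unfolding e1 by simp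
    then show False using m0 zero_le_power2[of "norm (\<Sum>i\<in>I. \<mu> i *\<^sub>R z i)"] by linarith
  qed
  have "norm (x - c i) \<le> norm (z i)" if "i \<in> S" for i
  proof -
    have "(norm (x - c i))\<^sup>2 \<le> (norm (z i))\<^sup>2" using fle[OF that] \<open>m \<le> 0\<close> unfolding f_def by linarith
    then show ?thesis by (rule power2_le_imp_le) simp
  qed
  then show ?thesis by blast
qed


lemma half_sum [simp]: "(1/2::real) *\<^sub>R x + (1/2) *\<^sub>R x = (x::'a::real_vector)"
  using scaleR_add_left[of "1/2" "1/2" x] by simp

lemma mm_mono:
  assumes "maximal_monotone B" "u \<in> B x" "v \<in> B y"
  shows "inner (u - v) (x - y) \<ge> 0"
  using assms unfolding maximal_monotone_def monotone_op_def by blast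

lemma mm_max:
  assumes "maximal_monotone B" "\<And>y v. v \<in> B y \<Longrightarrow> inner (u - v) (x - y) \<ge> 0"
  shows "u \<in> B x"
  using assms unfolding maximal_monotone_def by blast

lemma minty:
  fixes B :: "'a::{real_inner,complete_space} \<Rightarrow> 'a set"
  assumes mm: "maximal_monotone B" and al: "\<alpha> > 0"
  shows "\<exists>x. \<exists>u\<in>B x. w = x + \<alpha> *\<^sub>R u"
proof -
  define G where "G = {(y, v). v \<in> B y}"
  define cc where "cc q = fst q + (1/2) *\<^sub>R (w - \<alpha> *\<^sub>R snd q - fst q)" for q
  define zz where "zz q = (1/2) *\<^sub>R (w - \<alpha> *\<^sub>R snd q - fst q)" for q
  define KK where "KK = (\<lambda>q. cball (cc q) (norm (zz q))) ` G"
  have lip: "norm (cc p - cc q) \<le> norm (zz p - zz q)" if pq: "p \<in> G" "q \<in> G" for p q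
  proof -
    define Y where "Y = fst p - fst q"
    define V where "V = snd p - snd q"
    have mon: "inner V Y \<ge> 0" unfolding V_def Y_def using pq mm_mono[OF mm] by (auto simp: G_def)
    have e1: "cc p - cc q = (1/2) *\<^sub>R (Y - \<alpha> *\<^sub>R V)"
      unfolding cc_def Y_def V_def by (simp add: algebra_simps)
    have e2: "zz p - zz q = - ((1/2) *\<^sub>R (Y + \<alpha> *\<^sub>R V))"
      unfolding zz_def Y_def V_def by (simp add: algebra_simps)
    have "(norm (Y - \<alpha> *\<^sub>R V))\<^sup>2 = (norm Y)\<^sup>2 - 2 * (\<alpha> * inner Y V) + (norm (\<alpha> *\<^sub>R V))\<^sup>2"
      by (simp add: nsq_diff)
    also have "\<dots> \<le> (norm Y)\<^sup>2 + 2 * (\<alpha> * inner Y V) + (norm (\<alpha> *\<^sub>R V))\<^sup>2"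
      using mon al by (simp add: inner_commute)
    also have "\<dots> = (norm (Y + \<alpha> *\<^sub>R V))\<^sup>2" by (simp add: nsq_add)
    finally have "norm (Y - \<alpha> *\<^sub>R V) \<le> norm (Y + \<alpha> *\<^sub>R V)" by (rule power2_le_imp_le) simp
    then show ?thesis unfolding e1 e2 by simp
  qed
  have "\<exists>x. \<forall>q\<in>G. norm (x - cc q) \<le> norm (zz q)"
  proof (cases "G = {}")
    case True
    then show ?thesis by simp
  next
    case False
    then obtain q0 where q0: "q0 \<in> G" by blast
    have "\<Inter>KK \<noteq> {}"
    proof (rule hilbert_fip)
      show "closed K \<and> convex K" if "K \<in> KK" for K
        using that unfolding KK_def by auto
      show "cball (cc q0) (norm (zz q0)) \<in> KK" unfolding KK_def using q0 by (rule imageI)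
      show "bounded (cball (cc q0) (norm (zz q0)))" by simp
      show "\<Inter>F \<noteq> {}" if F: "finite F" "F \<subseteq> KK" for F
      proof -
        obtain G' where G': "G' \<subseteq> G" "finite G'" "F = (\<lambda>q. cball (cc q) (norm (zz q))) ` G'"
          using finite_subset_image[OF F[unfolded KK_def]] by blast
        have "\<exists>x. \<forall>q\<in>G'. norm (x - cc q) \<le> norm (zz q)"
          by (rule kirsz_finite[OF G'(2)], rule lip) (use G'(1) in auto)
        then obtain x where x: "\<forall>q\<in>G'. norm (x - cc q) \<le> norm (zz q)" by blast
        have "x \<in> \<Inter>F" unfolding G'(3) using x by (auto simp: dist_norm norm_minus_commute)
        then show ?thesis by (rule ex_in_conv[THEN iffD1, OF exI])
      qed
    qed
    then obtain x where "x \<in> \<Inter>KK" by blast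
    then have "\<forall>q\<in>G. norm (x - cc q) \<le> norm (zz q)"
      unfolding KK_def by (auto simp: dist_norm norm_minus_commute)
    then show ?thesis by blast
  qed
  then obtain x where x: "\<And>q. q \<in> G \<Longrightarrow> norm (x - cc q) \<le> norm (zz q)" by blast
  define u where "u = (1/\<alpha>) *\<^sub>R (w - x)"
  have "u \<in> B x"
  proof (rule mm_max[OF mm])
    fix y v assume v: "v \<in> B y"
    define a where "a = w - \<alpha> *\<^sub>R v - y"
    have "norm (x - cc (y, v)) \<le> norm (zz (y, v))" using x v by (simp add: G_def)
    then have "norm ((x - y) - (1/2) *\<^sub>R a) \<le> norm ((1/2) *\<^sub>R a)"
      by (simp add: cc_def zz_def a_def algebra_simps)
    then have "(norm ((x - y) - (1/2) *\<^sub>R a))\<^sup>2 \<le> (norm ((1/2) *\<^sub>R a))\<^sup>2"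
      by (simp add: power_mono)
    then have "(norm (x - y))\<^sup>2 - 2 * inner (x - y) ((1/2) *\<^sub>R a) \<le> 0"
      unfolding nsq_diff by simp
    then have q: "(norm (x - y))\<^sup>2 \<le> inner (x - y) a" by simp
    have "u - v = (1/\<alpha>) *\<^sub>R (a - (x - y))"
      unfolding u_def a_def using al by (simp add: algebra_simps)
    then have "inner (u - v) (x - y) = (1/\<alpha>) * (inner a (x - y) - (norm (x - y))\<^sup>2)"
      by (simp add: inner_diff_left power2_norm_eq_inner)
    also have "\<dots> \<ge> 0" using q al by (simp add: inner_commute)
    finally show "inner (u - v) (x - y) \<ge> 0" .
  qed
  moreover have "w = x + \<alpha> *\<^sub>R u" unfolding u_def using al by simp
  ultimately show ?thesis by blast
qed

lemma resolvent_prop: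
  fixes B :: "'a::{real_inner,complete_space} \<Rightarrow> 'a set"
  assumes mm: "maximal_monotone B" and al: "\<alpha> > 0"
  shows "\<exists>u\<in>B (resolvent \<alpha> B w). w = resolvent \<alpha> B w + \<alpha> *\<^sub>R u"
proof -
  have ex: "\<exists>x. \<exists>u\<in>B x. w = x + \<alpha> *\<^sub>R u" by (rule minty[OF mm al])
  have uniq: "x1 = x2" if h1: "\<exists>u\<in>B x1. w = x1 + \<alpha> *\<^sub>R u" and h2: "\<exists>u\<in>B x2. w = x2 + \<alpha> *\<^sub>R u" for x1 x2
  proof -
    obtain u1 where u1: "u1 \<in> B x1" "w = x1 + \<alpha> *\<^sub>R u1" using h1 by blast
    obtain u2 where u2: "u2 \<in> B x2" "w = x2 + \<alpha> *\<^sub>R u2" using h2 by blast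
    have d: "x1 - x2 = \<alpha> *\<^sub>R (u2 - u1)" using u1(2) u2(2) by (simp add: algebra_simps)
    have "0 \<le> inner (u1 - u2) (x1 - x2)" by (rule mm_mono[OF mm u1(1) u2(1)])
    also have "\<dots> = - \<alpha> * (norm (u1 - u2))\<^sup>2"
      unfolding d by (simp add: power2_norm_eq_inner inner_diff_left inner_diff_right inner_commute algebra_simps)
    finally have "(norm (u1 - u2))\<^sup>2 \<le> 0" using al by (simp add: mult_le_0_iff)
    then have "u1 = u2" by simp
    then show ?thesis using d by simp
  qed
  have "\<exists>!x. \<exists>u\<in>B x. w = x + \<alpha> *\<^sub>R u" using ex uniq by blast
  then show ?thesis unfolding resolvent_def by (rule theI')
qed


lemma uc_growth:
  fixes f :: "'a::real_normed_vector \<Rightarrow> 'b::real_normed_vector"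
  assumes "uniformly_continuous_on UNIV f"
  shows "\<exists>L\<ge>0. \<forall>x y. norm (f y - f x) \<le> 1 + L * norm (y - x)"
proof -
  obtain d where d: "d > 0" "\<And>x y. dist y x < d \<Longrightarrow> dist (f y) (f x) < 1"
    using assms unfolding uniformly_continuous_on_def by (metis UNIV_I zero_less_one)
  have step: "norm (y - x) \<le> d / 2 \<Longrightarrow> norm (f y - f x) \<le> 1" for x y
  proof -
    assume "norm (y - x) \<le> d / 2"
    then have "dist y x < d" using d(1) by (simp add: dist_norm)
    then have "dist (f y) (f x) < 1" by (rule d(2))
    then show ?thesis by (simp add: dist_norm)
  qed
  have claim: "\<forall>x y. norm (y - x) \<le> real n * (d / 2) \<longrightarrow> norm (f y - f x) \<le> real n" for n
  proof (induction n)
    case 0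
    then show ?case by simp
  next
    case (Suc n)
    show ?case
    proof (intro allI impI)
      fix x y :: 'a assume xy: "norm (y - x) \<le> real (Suc n) * (d / 2)"
      show "norm (f y - f x) \<le> real (Suc n)"
      proof (cases "norm (y - x) \<le> d / 2")
        case True
        then show ?thesis using step[OF True] by simp
      next
        case False
        define r where "r = norm (y - x)"
        have r: "r > d / 2" using False by (simp add: r_def)
        then have r0: "r > 0" using d(1) by simp
        define u where "u = y - ((d / 2) / r) *\<^sub>R (y - x)"
        have "u - x = (1 - (d / 2) / r) *\<^sub>R (y - x)" by (simp add: u_def algebra_simps)
        then have "norm (u - x) = \<bar>1 - (d / 2) / r\<bar> * r" by (simp add: r_def)
        also have "\<bar>1 - (d / 2) / r\<bar> = 1 - (d / 2) / r" using r r0 by (simp add: field_simps)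
        also have "(1 - (d / 2) / r) * r = r - d / 2" using r0 by (simp add: field_simps)
        finally have "norm (u - x) \<le> real n * (d / 2)" using xy by (simp add: r_def algebra_simps)
        then have a: "norm (f u - f x) \<le> real n" using Suc.IH by blast
        have "y - u = ((d / 2) / r) *\<^sub>R (y - x)" by (simp add: u_def)
        then have "norm (y - u) = ((d / 2) / r) * r" using d(1) r0 by (simp add: r_def)
        also have "\<dots> = d / 2" using r0 by simp
        finally have b: "norm (f y - f u) \<le> 1" using step by simp
        have "norm (f y - f x) \<le> norm (f y - f u) + norm (f u - f x)"
          by (rule norm_diff_triangle_le[of _ "f u"]) simp_all
        then show ?thesis using a b by simp
      qed
    qed
  qed
  have "norm (f y - f x) \<le> 1 + (2 / d) * norm (y - x)" for x y
  proof -
    define n where "n = nat \<lceil>norm (y - x) / (d / 2)\<rceil>"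
    have n1: "norm (y - x) / (d / 2) \<le> real n" unfolding n_def by (rule real_nat_ceiling_ge)
    have a0: "0 \<le> norm (y - x) / (d / 2)" using d(1) by simp
    then have "real n = of_int \<lceil>norm (y - x) / (d / 2)\<rceil>" unfolding n_def by simp
    then have n2: "real n \<le> norm (y - x) / (d / 2) + 1"
      using of_int_ceiling_le_add_one[of "norm (y - x) / (d / 2)"] by linarith
    have "norm (y - x) \<le> real n * (d / 2)" using n1 d(1) by (simp add: field_simps)
    then have "norm (f y - f x) \<le> real n" using claim by blast
    also have "\<dots> \<le> 1 + (2 / d) * norm (y - x)" using n2 by (simp add: field_simps)
    finally show ?thesis .
  qed
  moreover have "2 / d \<ge> 0" using d(1) by simp
  ultimately show ?thesis by blast
qed


lemma zer_char:
  fixes A1 A2 :: "'a::{real_inner,complete_space} \<Rightarrow> 'a" and B :: "'a \<Rightarrow> 'a set"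
  assumes b: "\<beta> > 0" and co: "cocoercive \<beta> A1" and m2: "maximal_monotone (\<lambda>z. {A2 z})"
    and uc: "uniformly_continuous_on UNIV A2" and mB: "maximal_monotone B"
  shows "zer_sum (\<lambda>z. A1 z + A2 z) B = {x. \<forall>y v. v \<in> B y \<longrightarrow> inner (A1 y + A2 y + v) (y - x) \<ge> 0}"
proof -
  have A2mono: "inner (A2 x - A2 y) (x - y) \<ge> 0" for x y
    by (rule mm_mono[OF m2]) simp_all
  have A1co: "\<beta> * (norm (A1 x - A1 y))\<^sup>2 \<le> inner (A1 x - A1 y) (x - y)" for x y
    using co unfolding cocoercive_def by blast
  have A1mono: "inner (A1 x - A1 y) (x - y) \<ge> 0" for x y
    using A1co[of x y] b by (smt (verit) mult_nonneg_nonneg zero_le_power2)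
  have A1lip: "norm (A1 x - A1 y) \<le> norm (x - y) / \<beta>" for x y
  proof -
    define n where "n = norm (A1 x - A1 y)"
    have "\<beta> * n\<^sup>2 \<le> n * norm (x - y)"
      using A1co[of x y] norm_cauchy_schwarz[of "A1 x - A1 y" "x - y"] unfolding n_def by linarith
    then have "\<beta> * n \<le> norm (x - y)"
    proof (cases "n = 0")
      case True then show ?thesis by simp
    next
      case False
      then have n0: "n > 0" unfolding n_def by simp
      assume "\<beta> * n\<^sup>2 \<le> n * norm (x - y)"
      then have "n * (\<beta> * n) \<le> n * norm (x - y)" by (simp add: power2_eq_square algebra_simps)
      then show ?thesis using n0 by simp
    qed
    then show ?thesis unfolding n_def using b by (simp add: field_simps)
  qed
  define A where "A = (\<lambda>z. A1 z + A2 z)"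
  have Amono: "inner (A x - A y) (x - y) \<ge> 0" for x y
  proof -
    have "A x - A y = (A1 x - A1 y) + (A2 x - A2 y)" by (simp add: A_def algebra_simps)
    then show ?thesis using A1mono[of x y] A2mono[of x y] by (simp add: inner_add_left)
  qed
  show ?thesis unfolding A_def[symmetric]
  proof (rule set_eqI, rule iffI)
    fix x assume "x \<in> zer_sum A B"
    then obtain u where u: "u \<in> B x" "A x + u = 0" unfolding zer_sum_def by blast
    show "x \<in> {x. \<forall>y v. v \<in> B y \<longrightarrow> inner (A1 y + A2 y + v) (y - x) \<ge> 0}"
    proof (intro CollectI allI impI)
      fix y v assume v: "v \<in> B y"
      have "inner (v - u) (y - x) \<ge> 0" by (rule mm_mono[OF mB v u(1)])
      moreover have "inner (A y - A x) (y - x) \<ge> 0" by (rule Amono)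
      ultimately have "inner ((A y + v) - (A x + u)) (y - x) \<ge> 0"
        by (simp add: inner_diff_left inner_add_left)
      then show "inner (A1 y + A2 y + v) (y - x) \<ge> 0" using u(2) by (simp add: A_def)
    qed
  next
    fix x assume "x \<in> {x. \<forall>y v. v \<in> B y \<longrightarrow> inner (A1 y + A2 y + v) (y - x) \<ge> 0}"
    then have P: "\<And>y v. v \<in> B y \<Longrightarrow> inner (A y + v) (y - x) \<ge> 0" by (simp add: A_def)
    obtain L where L: "L \<ge> 0" "\<And>x y. norm (A2 y - A2 x) \<le> 1 + L * norm (y - x)"
      using uc_growth[OF uc] by blast
    define Lt where "Lt = 1 / \<beta> + L"
    have Lt0: "Lt \<ge> 0" using b L(1) by (simp add: Lt_def)
    define y where "y t = resolvent t B (x - t *\<^sub>R A x)" for t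
    define v where "v t = (1/t) *\<^sub>R (x - y t) - A x" for t
    have vB: "v t \<in> B (y t)" if t: "t > 0" for t
    proof -
      obtain u where u: "u \<in> B (y t)" "x - t *\<^sub>R A x = y t + t *\<^sub>R u"
        using resolvent_prop[OF mB t, of "x - t *\<^sub>R A x"] unfolding y_def by blast
      have "t *\<^sub>R u = (x - y t) - t *\<^sub>R A x" using u(2) by (simp add: algebra_simps)
      then have "(1/t) *\<^sub>R (t *\<^sub>R u) = (1/t) *\<^sub>R ((x - y t) - t *\<^sub>R A x)" by simp
      then have "u = v t" using t by (simp add: v_def scaleR_diff_right)
      then show ?thesis using u(1) by simp
    qed
    have b1: "norm (y t - x) \<le> t * norm (A (y t) - A x)" if t: "t > 0" for t
    proof -
      define n where "n = norm (y t - x)"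
      have "0 \<le> inner (A (y t) + v t) (y t - x)" by (rule P[OF vB[OF t]])
      also have "A (y t) + v t = (A (y t) - A x) - (1/t) *\<^sub>R (y t - x)"
        by (simp add: v_def algebra_simps)
      also have "inner \<dots> (y t - x) = inner (A (y t) - A x) (y t - x) - (1/t) * n\<^sup>2"
        by (simp add: inner_diff_left n_def power2_norm_eq_inner)
      finally have "(1/t) * n\<^sup>2 \<le> inner (A (y t) - A x) (y t - x)" by simp
      also have "\<dots> \<le> norm (A (y t) - A x) * n" unfolding n_def by (rule norm_cauchy_schwarz)
      finally have "(1/t) * n\<^sup>2 \<le> norm (A (y t) - A x) * n" .
      then have "n * n \<le> n * (t * norm (A (y t) - A x))"
        using t by (simp add: field_simps power2_eq_square)
      then show ?thesis
      proof (cases "n = 0")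
        case True then show ?thesis using t unfolding n_def by simp
      next
        case False
        then have "n > 0" unfolding n_def by simp
        moreover assume "n * n \<le> n * (t * norm (A (y t) - A x))"
        ultimately show ?thesis unfolding n_def[symmetric] by simp
      qed
    qed
    have b2: "norm (A z - A x) \<le> 1 + Lt * norm (z - x)" for z
    proof -
      have "norm (A z - A x) \<le> norm (A1 z - A1 x) + norm (A2 z - A2 x)"
        unfolding A_def by (rule norm_diff_triangle_le[of _ "A1 x + A2 z"]) (simp_all add: algebra_simps)
      also have "\<dots> \<le> norm (z - x) / \<beta> + (1 + L * norm (z - x))"
        using A1lip[of z x] L(2)[of z x] by linarith
      also have "\<dots> = 1 + Lt * norm (z - x)" by (simp add: Lt_def algebra_simps)
      finally show ?thesis .
    qed
    have b3: "norm (y t - x) \<le> 2 * t" if t: "0 < t" "t * Lt \<le> 1/2" for t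
    proof -
      define n where "n = norm (y t - x)"
      have "n \<le> t * (1 + Lt * n)"
        unfolding n_def using b1[OF t(1)] b2[of "y t"] t(1) by (meson mult_left_mono less_imp_le order_trans)
      also have "\<dots> = t + (t * Lt) * n" by (simp add: algebra_simps)
      also have "(t * Lt) * n \<le> (1/2) * n" using t(2) by (intro mult_right_mono) (simp_all add: n_def)
      finally show ?thesis unfolding n_def[symmetric] by simp
    qed
    have ev: "\<forall>\<^sub>F t in at_right (0::real). 0 < t \<and> t * Lt \<le> 1/2"
      unfolding eventually_at_right_field
    proof (intro exI[of _ "1 / (2 * Lt + 2)"] conjI allI impI)
      show "(0::real) < 1 / (2 * Lt + 2)" using Lt0 by simp
      fix t :: real assume t: "0 < t" "t < 1 / (2 * Lt + 2)"
      show "0 < t" using t by simp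
      have "t * Lt \<le> (1 / (2 * Lt + 2)) * Lt" using t Lt0 by (intro mult_right_mono) simp_all
      also have "\<dots> \<le> 1/2" using Lt0 by (simp add: field_simps)
      finally show "t * Lt \<le> 1/2" .
    qed
    have ntriv: "at_right (0::real) \<noteq> bot" by (rule trivial_limit_at_right_real)
    have id0: "((\<lambda>t::real. 2 * t) \<longlongrightarrow> 0) (at_right 0)"
    proof -
      have "((\<lambda>t::real. 2 * t) \<longlongrightarrow> 2 * 0) (at_right 0)" by (intro tendsto_intros)
      then show ?thesis by simp
    qed
    have yx0: "((\<lambda>t. y t - x) \<longlongrightarrow> 0) (at_right 0)"
      by (rule Lim_null_comparison[OF eventually_mono[OF ev] id0]) (use b3 in auto)
    have yx: "(y \<longlongrightarrow> x) (at_right 0)" using LIM_zero_cancel[OF yx0] .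
    have nyx: "((\<lambda>t. norm (y t - x) / \<beta>) \<longlongrightarrow> 0) (at_right 0)"
    proof -
      have "((\<lambda>t. norm (y t - x) / \<beta>) \<longlongrightarrow> 0 / \<beta>) (at_right 0)"
        by (intro tendsto_divide tendsto_norm_zero yx0 tendsto_const) (use b in simp)
      then show ?thesis by simp
    qed
    have A1y: "((\<lambda>t. A1 (y t) - A1 x) \<longlongrightarrow> 0) (at_right 0)"
      by (rule Lim_null_comparison[OF always_eventually nyx]) (use A1lip in blast)
    have A2c: "isCont A2 x"
      using uniformly_continuous_imp_continuous[OF uc] continuous_on_eq_continuous_at[of UNIV A2] by simp
    have A2y: "((\<lambda>t. A2 (y t)) \<longlongrightarrow> A2 x) (at_right 0)" by (rule isCont_tendsto_compose[OF A2c yx])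
    have Ay0: "((\<lambda>t. A (y t) - A x) \<longlongrightarrow> 0) (at_right 0)"
    proof -
      have "((\<lambda>t. (A1 (y t) - A1 x) + (A2 (y t) - A2 x)) \<longlongrightarrow> 0 + 0) (at_right 0)"
        by (intro tendsto_add A1y LIM_zero A2y)
      then show ?thesis by (simp add: A_def algebra_simps)
    qed
    have q0: "((\<lambda>t. (1/t) *\<^sub>R (x - y t)) \<longlongrightarrow> 0) (at_right 0)"
    proof (rule Lim_null_comparison[OF _ tendsto_norm_zero[OF Ay0]])
      show "\<forall>\<^sub>F t in at_right 0. norm ((1/t) *\<^sub>R (x - y t)) \<le> norm (A (y t) - A x)"
      proof (rule eventually_mono[OF ev])
        fix t :: real assume t: "0 < t \<and> t * Lt \<le> 1/2"
        have "norm ((1/t) *\<^sub>R (x - y t)) = norm (y t - x) / t"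
          using t by (simp add: norm_minus_commute)
        also have "\<dots> \<le> norm (A (y t) - A x)" using b1[of t] t by (simp add: field_simps)
        finally show "norm ((1/t) *\<^sub>R (x - y t)) \<le> norm (A (y t) - A x)" .
      qed
    qed
    have vlim: "(v \<longlongrightarrow> 0 - A x) (at_right 0)"
      unfolding v_def by (intro tendsto_diff q0 tendsto_const)
    have "- A x \<in> B x"
    proof (rule mm_max[OF mB])
      fix y' v' assume v': "v' \<in> B y'"
      have lim: "((\<lambda>t. inner (v t - v') (y t - y')) \<longlongrightarrow> inner (0 - A x - v') (x - y')) (at_right 0)"
        by (intro tendsto_inner tendsto_diff vlim yx tendsto_const)
      have "\<forall>\<^sub>F t in at_right 0. 0 \<le> inner (v t - v') (y t - y')"
        by (rule eventually_mono[OF ev]) (use vB mm_mono[OF mB _ v'] in blast)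
      from tendsto_lowerbound[OF lim this ntriv] show "0 \<le> inner (- A x - v') (x - y')" by simp
    qed
    then show "x \<in> zer_sum A B" unfolding zer_sum_def by force
  qed
qed


lemma hs_eq: "{z. inner n (z - p) \<le> r} = {z. inner n z \<le> r + inner n (p::'a::real_inner)}"
  by (auto simp: inner_diff_right)

lemma hs_closed: "closed {z. inner n (z - p) \<le> (r::real)}"
  unfolding hs_eq by (rule closed_halfspace_le)

lemma hs_convex: "convex {z. inner n (z - p) \<le> (r::real)}"
  unfolding hs_eq by (rule convex_halfspace_le)

lemma T_incl:
  fixes A1 A2 :: "'a::{real_inner,complete_space} \<Rightarrow> 'a" and B :: "'a \<Rightarrow> 'a set"
  assumes b: "\<beta> > 0" and co: "cocoercive \<beta> A1" and m2: "maximal_monotone (\<lambda>z. {A2 z})"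
    and mB: "maximal_monotone B" and al: "\<alpha> > 0" "\<alpha> \<le> 4 * \<beta> * \<delta>bar"
    and z: "z \<in> zer_sum (\<lambda>z. A1 z + A2 z) B"
  shows "z \<in> T_set A1 A2 B \<delta>bar \<alpha> xk"
proof -
  define xb where "xb = trial_pt A1 A2 B \<alpha> xk"
  obtain u where u: "u \<in> B xb" "xk - \<alpha> *\<^sub>R (A1 xk + A2 xk) = xb + \<alpha> *\<^sub>R u"
    using resolvent_prop[OF mB al(1), of "xk - \<alpha> *\<^sub>R (A1 xk + A2 xk)"]
    unfolding xb_def trial_pt_def by blast
  obtain u' where u': "u' \<in> B z" "A1 z + A2 z + u' = 0" using z unfolding zer_sum_def by blast
  have ueq: "u = (1/\<alpha>) *\<^sub>R (xk - xb) - (A1 xk + A2 xk)"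
  proof -
    have "\<alpha> *\<^sub>R u = (xk - xb) - \<alpha> *\<^sub>R (A1 xk + A2 xk)" using u(2) by (simp add: algebra_simps)
    then have "(1/\<alpha>) *\<^sub>R (\<alpha> *\<^sub>R u) = (1/\<alpha>) *\<^sub>R ((xk - xb) - \<alpha> *\<^sub>R (A1 xk + A2 xk))" by simp
    then show ?thesis using al(1) by (simp add: scaleR_diff_right)
  qed
  have u'eq: "u' = - (A1 z + A2 z)"
  proof -
    have "u' = (A1 z + A2 z + u') - (A1 z + A2 z)" by simp
    also have "\<dots> = - (A1 z + A2 z)" using u'(2) by simp
    finally show ?thesis .
  qed
  define e where "e = norm (xk - xb)"
  define d where "d = A1 xk - A1 z"
  define nn where "nn = (1/\<alpha>) *\<^sub>R (xk - xb) - (A2 xk - A2 xb)"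
  have split: "nn = (u - u') + d + (A2 xb - A2 z)"
    unfolding nn_def d_def ueq u'eq by (simp add: algebra_simps)
  have t1: "inner (u - u') (z - xb) \<le> 0"
    using mm_mono[OF mB u(1) u'(1)] by (simp add: inner_diff_right inner_commute)
  have t3: "inner (A2 xb - A2 z) (z - xb) \<le> 0"
  proof -
    have "inner (A2 xb - A2 z) (xb - z) \<ge> 0" by (rule mm_mono[OF m2]) simp_all
    then show ?thesis by (simp add: inner_diff_right)
  qed
  have coc: "\<beta> * (norm d)\<^sup>2 \<le> inner d (xk - z)" using co unfolding cocoercive_def d_def by blast
  have "inner d (z - xb) = inner d (xk - xb) - inner d (xk - z)" by (simp add: inner_diff_right)
  also have "\<dots> \<le> norm d * e - \<beta> * (norm d)\<^sup>2"
    using norm_cauchy_schwarz[of d "xk - xb"] coc unfolding e_def by linarith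
  also have "\<dots> \<le> e\<^sup>2 / (4 * \<beta>)"
  proof -
    have "0 \<le> (2 * \<beta> * norm d - e)\<^sup>2" by simp
    then have "4 * \<beta> * (norm d * e - \<beta> * (norm d)\<^sup>2) \<le> e\<^sup>2"
      by (simp add: power2_eq_square algebra_simps)
    then show ?thesis using b by (simp add: field_simps)
  qed
  also have "\<dots> \<le> (\<delta>bar / \<alpha>) * e\<^sup>2"
  proof -
    have "1 / (4 * \<beta>) \<le> \<delta>bar / \<alpha>" using al b by (simp add: field_simps)
    then have "(1 / (4 * \<beta>)) * e\<^sup>2 \<le> (\<delta>bar / \<alpha>) * e\<^sup>2" by (rule mult_right_mono) simp
    then show ?thesis by simp
  qed
  finally have t2: "inner d (z - xb) \<le> (\<delta>bar / \<alpha>) * e\<^sup>2" .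
  have "inner nn (z - xb) = inner (u - u') (z - xb) + inner d (z - xb) + inner (A2 xb - A2 z) (z - xb)"
    unfolding split by (simp add: inner_add_left)
  then have "inner nn (z - xb) \<le> (\<delta>bar / \<alpha>) * e\<^sup>2" using t1 t2 t3 by linarith
  then show ?thesis unfolding T_set_def Let_def xb_def[symmetric] nn_def[symmetric] e_def by simp
qed


theorem lemma4p13:
  fixes A1 A2 :: "'a::{real_inner, complete_space} \<Rightarrow> 'a"
    and B :: "'a \<Rightarrow> 'a set"
    and \<beta> \<theta> \<delta> \<delta>bar \<alpha>m1 :: real
    and x :: "nat \<Rightarrow> 'a"
    and a :: "nat \<Rightarrow> real"
  assumes "\<beta> > 0" and "cocoercive \<beta> A1"
    and "maximal_monotone (\<lambda>z. {A2 z})" and "uniformly_continuous_on UNIV A2"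
    and "maximal_monotone B"
    and "zer_sum (\<lambda>z. A1 z + A2 z) B \<noteq> {}"
    and "0 < \<theta>" "\<theta> < 1" "0 < \<delta>" "\<delta> < 1" "\<delta>bar > 0" "1 - \<delta> - \<delta>bar > 0"
    and "\<alpha>m1 > 0" "\<alpha>m1 \<le> 4 * \<beta> * \<delta>bar"
    and a0: "a 0 = \<alpha>m1"
    and a_step: "\<And>k. a (Suc k) = a k * \<theta> ^ jstep A1 A2 B \<theta> \<delta> (a k) (x k)"
    and x_step: "\<And>k. x (Suc k) = proj (T_set A1 A2 B \<delta>bar (a (Suc k)) (x k) \<inter> Gamma_set (x 0) (x k)) (x 0)"
  shows "bounded (range x) \<and>
    (\<forall>k. x k \<in> cball ((1/2) *\<^sub>R (x 0 + proj (zer_sum (\<lambda>z. A1 z + A2 z) B) (x 0)))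
                    ((1/2) * infdist (x 0) (zer_sum (\<lambda>z. A1 z + A2 z) B)))"
proof -
  note b = assms(1) and co = assms(2) and m2 = assms(3) and uc = assms(4) and mB = assms(5)
    and Sne = assms(6) and th = assms(7,8) and am = assms(13,14)
  define S where "S = zer_sum (\<lambda>z. A1 z + A2 z) B"
  have Seq: "S = (\<Inter>y. \<Inter>v\<in>B y. {z. inner (A1 y + A2 y + v) z \<le> inner (A1 y + A2 y + v) y})"
    unfolding S_def zer_char[OF b co m2 uc mB] by (auto simp: inner_diff_right)
  have Scl: "closed S" unfolding Seq by (intro closed_INT ballI closed_halfspace_le)
  have Scv: "convex S" unfolding Seq by (intro convex_INT ballI convex_halfspace_le)
  have Sne': "S \<noteq> {}" using Sne by (simp add: S_def)
  define xbar where "xbar = proj S (x 0)"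
  have xbS: "xbar \<in> S" unfolding xbar_def by (rule proj_props(1)[OF Scl Scv Sne'])
  have xbmin: "\<forall>z\<in>S. dist (x 0) xbar \<le> dist (x 0) z"
    unfolding xbar_def by (rule proj_props(2)[OF Scl Scv Sne'])
  have rho: "infdist (x 0) S = dist (x 0) xbar"
  proof (rule antisym)
    show "infdist (x 0) S \<le> dist (x 0) xbar" using xbS by (rule infdist_le)
    show "dist (x 0) xbar \<le> infdist (x 0) S"
      unfolding infdist_notempty[OF Sne'] using xbmin Sne' by (intro cINF_greatest) auto
  qed
  have apos: "0 < a k \<and> a k \<le> \<alpha>m1" for k
  proof (induction k)
    case 0
    then show ?case using a0 am by simp
  next
    case (Suc k)
    define j where "j = jstep A1 A2 B \<theta> \<delta> (a k) (x k)"
    have p1: "0 < \<theta> ^ j" using th by simp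
    have p2: "\<theta> ^ j \<le> 1" using th by (simp add: power_le_one)
    have "a (Suc k) = a k * \<theta> ^ j" unfolding j_def by (rule a_step)
    moreover have "0 < a k * \<theta> ^ j" using Suc.IH p1 by simp
    moreover have "a k * \<theta> ^ j \<le> a k * 1" by (rule mult_left_mono[OF p2]) (use Suc.IH in simp)
    then have "a k * \<theta> ^ j \<le> a k" by (simp only: mult_1_right)
    ultimately show ?case using Suc.IH by linarith
  qed
  have Tinc: "S \<subseteq> T_set A1 A2 B \<delta>bar (a (Suc k)) (x k)" for k
  proof
    fix z assume "z \<in> S"
    then show "z \<in> T_set A1 A2 B \<delta>bar (a (Suc k)) (x k)"
      using apos[of "Suc k"] am unfolding S_def by (intro T_incl[OF b co m2 mB]) simp_all
  qed
  have Tcl: "closed (T_set A1 A2 B \<delta>bar al xk) \<and> convex (T_set A1 A2 B \<delta>bar al xk)" for al xk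
    unfolding T_set_def Let_def using hs_closed hs_convex by blast
  have Gcl: "closed (Gamma_set x0 xk) \<and> convex (Gamma_set x0 xk)" for x0 xk :: 'a
    unfolding Gamma_set_def using hs_closed hs_convex by blast
  have Gam: "S \<subseteq> Gamma_set (x 0) (x k)" for k
  proof (induction k)
    case 0
    then show ?case by (auto simp: Gamma_set_def)
  next
    case (Suc k)
    define C where "C = T_set A1 A2 B \<delta>bar (a (Suc k)) (x k) \<inter> Gamma_set (x 0) (x k)"
    have SC: "S \<subseteq> C" unfolding C_def using Tinc[of k] Suc.IH by blast
    have Ccl: "closed C" unfolding C_def using Tcl Gcl by blast
    have Ccv: "convex C" unfolding C_def using Tcl Gcl by (blast intro: convex_Int)
    have Cne: "C \<noteq> {}" using SC Sne' by blast
    have xs: "x (Suc k) = proj C (x 0)" unfolding C_def by (rule x_step)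
    have "\<forall>w\<in>C. inner (x 0 - x (Suc k)) (w - x (Suc k)) \<le> 0"
      unfolding xs by (rule proj_props(3)[OF Ccl Ccv Cne])
    then show ?case using SC unfolding Gamma_set_def by blast
  qed
  define m where "m = (1/2) *\<^sub>R (x 0 + xbar)"
  define r where "r = (1/2) * infdist (x 0) S"
  have inball: "x k \<in> cball m r" for k
  proof -
    have g: "inner (x 0 - x k) (xbar - x k) \<le> 0" using Gam[of k] xbS unfolding Gamma_set_def by blast
    define p where "p = x k - x 0"
    define q where "q = x k - xbar"
    have e1: "x k - m = (1/2) *\<^sub>R (p + q)" unfolding m_def p_def q_def by (simp add: algebra_simps)
    have e2: "x 0 - xbar = q - p" unfolding p_def q_def by simp
    have "(norm (x k - m))\<^sup>2 = (1/4) * ((norm p)\<^sup>2 + 2 * inner p q + (norm q)\<^sup>2)"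
      unfolding e1 nsq_add[symmetric] by (simp add: power_mult_distrib power2_eq_square)
    moreover have "(norm (x 0 - xbar))\<^sup>2 = (norm q)\<^sup>2 - 2 * inner q p + (norm p)\<^sup>2"
      unfolding e2 by (rule nsq_diff)
    moreover have "inner p q = inner (x 0 - x k) (xbar - x k)"
      unfolding p_def q_def by (simp add: inner_diff_left inner_diff_right algebra_simps)
    ultimately have "(norm (x k - m))\<^sup>2 \<le> (1/4) * (norm (x 0 - xbar))\<^sup>2"
      using g by (simp add: inner_commute)
    also have "\<dots> = ((1/2) * norm (x 0 - xbar))\<^sup>2" by (simp add: power_mult_distrib power2_eq_square)
    finally have "norm (x k - m) \<le> (1/2) * norm (x 0 - xbar)" by (rule power2_le_imp_le) simp
    then show ?thesis unfolding r_def rho by (simp add: dist_norm norm_minus_commute)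
  qed
  have "bounded (range x)" by (rule bounded_subset[OF bounded_cball]) (use inball in blast)
  then show ?thesis using inball unfolding m_def r_def xbar_def S_def by blast
qed

end
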